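(* Every cactus graph of girth at least $4$ is $(2,1)$-colorable.
   Context: A cactus graph is a graph in which every $2$-connected component (block) is either a cycle or a single edge $K_2$. The girth is the length of a shortest cycle (infinite if acyclic). A set of vertices $X$ is $2$-independent if any two distinct vertices of $X$ are at distance at least $3$. A graph is $(a,b)$-colorable if its vertex set can be partitioned into $a$ independent sets and $b$ $2$-independent sets (some parts may be empty). *)

theory Defs
  imports Main
begin

definition simple_graph :: "'a set \<Rightarrow> ('a \<Rightarrow> 'a \<Rightarrow> bool) \<Rightarrow> bool" where
  "simple_graph V E \<longleftrightarrow> finite V \<and>
     (\<forall>u v. E u v \<longrightarrow> u \<in> V \<and> v \<in> V) \<and>
     (\<forall>u v. E u v \<longrightarrow> E v u) \<and> (\<forall>v. \<not> E v v)"

text \<open>A walk is a nonempty vertex list with consecutive vertices adjacent;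
its length (number of edges) is length xs - 1.\<close>

definition walk :: "('a \<Rightarrow> 'a \<Rightarrow> bool) \<Rightarrow> 'a list \<Rightarrow> bool" where
  "walk E xs \<longleftrightarrow> xs \<noteq> [] \<and> (\<forall>i. Suc i < length xs \<longrightarrow> E (xs ! i) (xs ! Suc i))"

definition connected_on :: "('a \<Rightarrow> 'a \<Rightarrow> bool) \<Rightarrow> 'a set \<Rightarrow> bool" where
  "connected_on E S \<longleftrightarrow> (\<forall>u\<in>S. \<forall>v\<in>S. \<exists>xs. walk E xs \<and> hd xs = u \<and> last xs = v \<and> set xs \<subseteq> S)"

text \<open>S spans a connected induced subgraph with at least two vertices and no cut vertex
(this covers 2-connected subgraphs and single edges K2).\<close>

definition nonsep_set :: "('a \<Rightarrow> 'a \<Rightarrow> bool) \<Rightarrow> 'a set \<Rightarrow> bool" where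
  "nonsep_set E S \<longleftrightarrow> finite S \<and> 2 \<le> card S \<and> connected_on E S \<and> (\<forall>v\<in>S. connected_on E (S - {v}))"

definition is_block :: "'a set \<Rightarrow> ('a \<Rightarrow> 'a \<Rightarrow> bool) \<Rightarrow> 'a set \<Rightarrow> bool" where
  "is_block V E B \<longleftrightarrow> B \<subseteq> V \<and> nonsep_set E B \<and> (\<forall>B'. B \<subset> B' \<and> B' \<subseteq> V \<longrightarrow> \<not> nonsep_set E B')"

definition is_cycle_graph_on :: "('a \<Rightarrow> 'a \<Rightarrow> bool) \<Rightarrow> 'a set \<Rightarrow> bool" where
  "is_cycle_graph_on E B \<longleftrightarrow> finite B \<and> 3 \<le> card B \<and> connected_on E B \<and>
     (\<forall>v\<in>B. card {u\<in>B. E v u} = 2)"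

definition is_K2_on :: "('a \<Rightarrow> 'a \<Rightarrow> bool) \<Rightarrow> 'a set \<Rightarrow> bool" where
  "is_K2_on E B \<longleftrightarrow> card B = 2 \<and> connected_on E B"

definition cactus :: "'a set \<Rightarrow> ('a \<Rightarrow> 'a \<Rightarrow> bool) \<Rightarrow> bool" where
  "cactus V E \<longleftrightarrow> simple_graph V E \<and>
     (\<forall>B. is_block V E B \<longrightarrow> is_cycle_graph_on E B \<or> is_K2_on E B)"

definition has_cycle_of_length :: "('a \<Rightarrow> 'a \<Rightarrow> bool) \<Rightarrow> nat \<Rightarrow> bool" where
  "has_cycle_of_length E k \<longleftrightarrow> (\<exists>xs. length xs = k \<and> 3 \<le> k \<and> distinct xs \<and> walk E xs \<and> E (last xs) (hd xs))"

text \<open>girth at least g (girth = length of a shortest cycle, infinite if acyclic).\<close>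

definition girth_at_least :: "('a \<Rightarrow> 'a \<Rightarrow> bool) \<Rightarrow> nat \<Rightarrow> bool" where
  "girth_at_least E g \<longleftrightarrow> (\<forall>k. has_cycle_of_length E k \<longrightarrow> g \<le> k)"

definition dist_le :: "('a \<Rightarrow> 'a \<Rightarrow> bool) \<Rightarrow> nat \<Rightarrow> 'a \<Rightarrow> 'a \<Rightarrow> bool" where
  "dist_le E d u v \<longleftrightarrow> (\<exists>xs. walk E xs \<and> hd xs = u \<and> last xs = v \<and> length xs \<le> Suc d)"

definition independent_set :: "('a \<Rightarrow> 'a \<Rightarrow> bool) \<Rightarrow> 'a set \<Rightarrow> bool" where
  "independent_set E X \<longleftrightarrow> (\<forall>x\<in>X. \<forall>y\<in>X. \<not> E x y)"

definition two_independent_set :: "('a \<Rightarrow> 'a \<Rightarrow> bool) \<Rightarrow> 'a set \<Rightarrow> bool" where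
  "two_independent_set E X \<longleftrightarrow> (\<forall>x\<in>X. \<forall>y\<in>X. x \<noteq> y \<longrightarrow> \<not> dist_le E 2 x y)"

text \<open>(a,b)-colorable: V partitioned into a independent sets (colours 0..a-1) and
b 2-independent sets (colours a..a+b-1); parts may be empty.\<close>

definition ab_colorable :: "'a set \<Rightarrow> ('a \<Rightarrow> 'a \<Rightarrow> bool) \<Rightarrow> nat \<Rightarrow> nat \<Rightarrow> bool" where
  "ab_colorable V E a b \<longleftrightarrow> (\<exists>c :: 'a \<Rightarrow> nat.
     (\<forall>v\<in>V. c v < a + b) \<and>
     (\<forall>i<a. independent_set E {v\<in>V. c v = i}) \<and>
     (\<forall>i. a \<le> i \<and> i < a + b \<longrightarrow> two_independent_set E {v\<in>V. c v = i}))"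

end

theory Submission
  imports Defs
begin


lemma walk_single[simp]: "walk E [x]"
  by (simp add: walk_def)

lemma walk_Cons_Cons[simp]: "walk E (x # y # xs) \<longleftrightarrow> E x y \<and> walk E (y # xs)"
  unfolding walk_def
proof safe
  fix i assume "\<forall>i. Suc i < length (x # y # xs) \<longrightarrow> E ((x # y # xs) ! i) ((x # y # xs) ! Suc i)"
    and "Suc i < length (y # xs)"
  then show "E ((y # xs) ! i) ((y # xs) ! Suc i)"
    by (metis Suc_less_eq length_Cons nth_Cons_Suc)
next
  assume "\<forall>i. Suc i < length (x # y # xs) \<longrightarrow> E ((x # y # xs) ! i) ((x # y # xs) ! Suc i)"
  then show "E x y" by (metis length_Cons nth_Cons_0 nth_Cons_Suc zero_less_Suc Suc_less_eq)
next
  fix i assume "E x y" "\<forall>i. Suc i < length (y # xs) \<longrightarrow> E ((y # xs) ! i) ((y # xs) ! Suc i)"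
    "Suc i < length (x # y # xs)"
  then show "E ((x # y # xs) ! i) ((x # y # xs) ! Suc i)"
    by (cases i) auto
qed

lemma walk_Nil[simp]: "\<not> walk E []" by (simp add: walk_def)

lemma walk_Cons: "walk E (x # xs) \<longleftrightarrow> (xs = [] \<or> (E x (hd xs) \<and> walk E xs))"
  by (cases xs) auto

lemma walk_append:
  "xs \<noteq> [] \<Longrightarrow> ys \<noteq> [] \<Longrightarrow> walk E (xs @ ys) \<longleftrightarrow> walk E xs \<and> walk E ys \<and> E (last xs) (hd ys)"
proof (induction xs)
  case Nil then show ?case by simp
next
  case (Cons x xs)
  show ?case
  proof (cases xs)
    case Nil
    then show ?thesis using Cons.prems by (cases ys) auto
  next
    case (Cons z zs)
    then have "walk E (xs @ ys) \<longleftrightarrow> walk E xs \<and> walk E ys \<and> E (last xs) (hd ys)"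
      using Cons.IH Cons.prems by simp
    then show ?thesis using Cons by simp
  qed
qed

lemma walk_mono: "walk E xs \<Longrightarrow> (\<And>x y. E x y \<Longrightarrow> E' x y) \<Longrightarrow> walk E' xs"
  unfolding walk_def by blast

lemma walk_take: "walk E xs \<Longrightarrow> 0 < n \<Longrightarrow> walk E (take n xs)"
  unfolding walk_def by simp

lemma walk_drop: "walk E xs \<Longrightarrow> n < length xs \<Longrightarrow> walk E (drop n xs)"
  unfolding walk_def
proof (intro conjI allI impI)
  fix i assume a: "xs \<noteq> [] \<and> (\<forall>i. Suc i < length xs \<longrightarrow> E (xs ! i) (xs ! Suc i))"
    and "Suc i < length (drop n xs)"
  then have "Suc (n + i) < length xs" by simp
  then have "E (xs ! (n + i)) (xs ! Suc (n + i))" using a by blast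
  then show "E (drop n xs ! i) (drop n xs ! Suc i)" using \<open>Suc i < length (drop n xs)\<close> by simp
qed simp

lemma walk_nth: "walk E xs \<Longrightarrow> Suc i < length xs \<Longrightarrow> E (xs ! i) (xs ! Suc i)"
  unfolding walk_def by blast

lemma conn_union:
  assumes "connected_on E X" "connected_on E Y" "w \<in> X" "w \<in> Y"
  shows "connected_on E (X \<union> Y)"
  unfolding connected_on_def
proof (intro ballI)
  have join: "\<exists>zs. walk E zs \<and> hd zs = u \<and> last zs = v \<and> set zs \<subseteq> X \<union> Y"
    if h: "connected_on E A" "connected_on E B" "u \<in> A" "v \<in> B" "w \<in> A" "w \<in> B"
      "A \<union> B = X \<union> Y" for A B u v
  proof -
    obtain xs where xs: "walk E xs" "hd xs = u" "last xs = w" "set xs \<subseteq> A"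
      using h unfolding connected_on_def by blast
    obtain ys where ys: "walk E ys" "hd ys = w" "last ys = v" "set ys \<subseteq> B"
      using h unfolding connected_on_def by blast
    show ?thesis
    proof (cases "tl ys")
      case Nil
      then have "ys = [w]" using ys by (cases ys) auto
      then show ?thesis using xs ys h by (intro exI[of _ xs]) auto
    next
      case (Cons a l)
      have ne: "xs \<noteq> []" "ys \<noteq> []" using xs ys by auto
      have ys': "ys = w # tl ys" using ys ne by (cases ys) auto
      have "walk E (xs @ tl ys)"
        using xs ys Cons ne ys' walk_append[of xs "tl ys" E]
        by (metis list.distinct(1) walk_Cons_Cons list.sel(1))
      moreover have "hd (xs @ tl ys) = u" using xs ne by simp
      moreover have "last (xs @ tl ys) = v" using ys Cons ys'
        by (metis last_ConsR list.distinct(1) last_appendR)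
      moreover have "set (xs @ tl ys) \<subseteq> X \<union> Y" using xs ys ne h
        by (auto dest: list.set_sel(2))
      ultimately show ?thesis by blast
    qed
  qed
  fix u v assume "u \<in> X \<union> Y" "v \<in> X \<union> Y"
  then consider "u \<in> X" "v \<in> X" | "u \<in> X" "v \<in> Y" | "u \<in> Y" "v \<in> X" | "u \<in> Y" "v \<in> Y" by blast
  then show "\<exists>xs. walk E xs \<and> hd xs = u \<and> last xs = v \<and> set xs \<subseteq> X \<union> Y"
  proof cases
    case 1 then show ?thesis using assms(1) unfolding connected_on_def by blast
  next
    case 2 then show ?thesis using join[of X Y u v] assms by blast
  next
    case 3 then show ?thesis using join[of Y X u v] assms by blast
  next
    case 4 then show ?thesis using assms(2) unfolding connected_on_def by blast
  qed
qed

lemma conn_single: "connected_on E {x}"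
  unfolding connected_on_def by (auto intro!: exI[of _ "[x]"])

lemma conn_empty: "connected_on E {}"
  unfolding connected_on_def by auto




definition cyc :: "('a \<Rightarrow> 'a \<Rightarrow> bool) \<Rightarrow> 'a list \<Rightarrow> bool" where
  "cyc E xs \<longleftrightarrow> 3 \<le> length xs \<and> distinct xs \<and> walk E xs \<and> E (last xs) (hd xs)"

definition PP :: "'a set \<Rightarrow> ('a \<Rightarrow> 'a \<Rightarrow> bool) \<Rightarrow> bool" where
  "PP V E \<longleftrightarrow> (\<forall>S. S \<subseteq> V \<longrightarrow> nonsep_set E S \<longrightarrow> (\<forall>v\<in>S. card {u\<in>S. E v u} \<le> 2))"

lemma conn_edge:
  assumes sym: "\<forall>u v. E u v \<longrightarrow> E v u" and "E x y"
  shows "connected_on E {x, y}"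
  unfolding connected_on_def
proof (intro ballI)
  fix u v assume "u \<in> {x, y}" "v \<in> {x, y}"
  then consider "u = x" "v = x" | "u = x" "v = y" | "u = y" "v = x" | "u = y" "v = y" by blast
  then show "\<exists>xs. walk E xs \<and> hd xs = u \<and> last xs = v \<and> set xs \<subseteq> {x, y}"
  proof cases
    case 1 then show ?thesis by (intro exI[of _ "[x]"]) auto
  next
    case 2 then show ?thesis using assms by (intro exI[of _ "[x,y]"]) auto
  next
    case 3 then show ?thesis using assms by (intro exI[of _ "[y,x]"]) auto
  next
    case 4 then show ?thesis by (intro exI[of _ "[y]"]) auto
  qed
qed

lemma conn_walk:
  assumes sym: "\<forall>u v. E u v \<longrightarrow> E v u"
  shows "walk E xs \<Longrightarrow> connected_on E (set xs)"
proof (induction xs)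
  case Nil then show ?case by simp
next
  case (Cons x xs)
  show ?case
  proof (cases xs)
    case Nil then show ?thesis using conn_single by simp
  next
    case (Cons y ys)
    then have "E x y" "walk E xs" using Cons.prems by auto
    then have "connected_on E ({x, y} \<union> set xs)"
      using conn_union[OF conn_edge[OF sym] Cons.IH, of x y y] Cons by auto
    moreover have "{x, y} \<union> set xs = set (x # xs)" using Cons by auto
    ultimately show ?thesis by simp
  qed
qed

lemma cyc_minus:
  assumes sym: "\<forall>u v. E u v \<longrightarrow> E v u" and c: "cyc E xs"
  shows "connected_on E (set xs - {v})"
proof (cases "v \<in> set xs")
  case False
  then show ?thesis using conn_walk[OF sym] c by (simp add: cyc_def)
next
  case True
  then obtain ps qs where xs: "xs = ps @ v # qs" by (meson in_set_conv_decomp)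
  have d: "distinct xs" and w: "walk E xs" and cl: "E (last xs) (hd xs)" using c by (auto simp: cyc_def)
  have eq: "set xs - {v} = set ps \<union> set qs" using d xs by auto
  show ?thesis
  proof (cases "ps = []")
    case True
    show ?thesis
    proof (cases "qs = []")
      case True
      then have "set xs - {v} = {}" using eq \<open>ps = []\<close> by simp
      then show ?thesis using conn_empty by metis
    next
      case False
      then have "walk E qs" using w xs \<open>ps = []\<close> by (cases qs) auto
      then show ?thesis using eq \<open>ps = []\<close> conn_walk[OF sym] by simp
    qed
  next
    case False
    have wps: "walk E ps" and wv: "walk E (v # qs)"
      using w xs False walk_append[of ps "v # qs" E] by auto
    show ?thesis
    proof (cases "qs = []")
      case True then show ?thesis using eq wps conn_walk[OF sym] by simp
    next
      case qne: False
      have wqs: "walk E qs" using wv qne by (cases qs) auto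
      have "last xs = last qs" "hd xs = hd ps" using xs qne False by auto
      then have "walk E (qs @ ps)" using walk_append[of qs ps E] wqs wps cl qne False by auto
      then have "connected_on E (set (qs @ ps))" using conn_walk[OF sym] by blast
      moreover have "set (qs @ ps) = set ps \<union> set qs" by auto
      ultimately show ?thesis using eq by simp
    qed
  qed
qed

lemma cyc_nonsep:
  assumes sym: "\<forall>u v. E u v \<longrightarrow> E v u" and c: "cyc E xs"
  shows "nonsep_set E (set xs)"
proof -
  have "card (set xs) = length xs" using c distinct_card by (auto simp: cyc_def)
  then show ?thesis using c cyc_minus[OF sym c] conn_walk[OF sym]
    unfolding nonsep_set_def cyc_def by auto
qed

lemma two_cyc_nonsep:
  assumes sym: "\<forall>u v. E u v \<longrightarrow> E v u" and c1: "cyc E xs" and c2: "cyc E ys"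
    and u: "u \<in> set xs" "u \<in> set ys" and w: "w \<in> set xs" "w \<in> set ys" and uw: "u \<noteq> w"
  shows "nonsep_set E (set xs \<union> set ys)"
proof -
  have "card (set xs) = length xs" using c1 distinct_card by (auto simp: cyc_def)
  then have "3 \<le> card (set xs)" using c1 by (simp add: cyc_def)
  moreover have "card (set xs) \<le> card (set xs \<union> set ys)" by (simp add: card_mono)
  ultimately have card: "2 \<le> card (set xs \<union> set ys)" by simp
  have conn: "connected_on E (set xs \<union> set ys)"
    using conn_union[OF conn_walk[OF sym] conn_walk[OF sym], of xs ys u] c1 c2 u by (auto simp: cyc_def)
  have "connected_on E (set xs \<union> set ys - {v})" for v
  proof -
    have eq: "set xs \<union> set ys - {v} = (set xs - {v}) \<union> (set ys - {v})" by auto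
    obtain t where "t \<in> set xs - {v}" "t \<in> set ys - {v}" using u w uw by blast
    then show ?thesis using eq conn_union[OF cyc_minus[OF sym c1] cyc_minus[OF sym c2]] by metis
  qed
  then show ?thesis using card conn unfolding nonsep_set_def by auto
qed

lemma PP_three:
  assumes pp: "PP V E" and sym: "\<forall>u v. E u v \<longrightarrow> E v u" and c1: "cyc E xs" and c2: "cyc E ys"
    and sub: "set xs \<subseteq> V" "set ys \<subseteq> V"
    and u: "u \<in> set xs" "u \<in> set ys" and w: "w \<in> set xs" "w \<in> set ys" and uw: "u \<noteq> w"
    and z: "z \<in> set xs \<union> set ys"
    and pqr: "p \<in> set xs \<union> set ys" "q \<in> set xs \<union> set ys" "r \<in> set xs \<union> set ys"
    and dist: "p \<noteq> q" "p \<noteq> r" "q \<noteq> r"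
    and e: "E z p" "E z q" "E z r"
  shows False
proof -
  let ?S = "set xs \<union> set ys"
  have ns: "nonsep_set E ?S" using two_cyc_nonsep[OF sym c1 c2 u w uw] .
  moreover have "?S \<subseteq> V" using sub by simp
  ultimately have "\<forall>v\<in>?S. card {u\<in>?S. E v u} \<le> 2" using pp unfolding PP_def by blast
  then have "card {t\<in>?S. E z t} \<le> 2" using z by blast
  moreover have "{p, q, r} \<subseteq> {t\<in>?S. E z t}" using pqr e by auto
  moreover have "finite {t\<in>?S. E z t}" by simp
  ultimately have "card {p, q, r} \<le> card {t\<in>?S. E z t}" by (intro card_mono)
  moreover have "card {p, q, r} = 3" using dist by simp
  ultimately show False using \<open>card {t\<in>?S. E z t} \<le> 2\<close> by linarith
qed

lemma cactus_PP:
  assumes "cactus V E"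
  shows "PP V E"
  unfolding PP_def
proof (intro allI impI ballI)
  fix S v assume S: "S \<subseteq> V" "nonsep_set E S" and v: "v \<in> S"
  have fin: "finite V" using assms by (simp add: cactus_def simple_graph_def)
  let ?P = "\<lambda>B. S \<subseteq> B \<and> B \<subseteq> V \<and> nonsep_set E B"
  have "\<forall>B. ?P B \<longrightarrow> card B < Suc (card V)"
    using fin by (simp add: card_mono le_imp_less_Suc)
  then obtain B where B: "?P B" and mx: "\<forall>B'. ?P B' \<longrightarrow> card B' \<le> card B"
    using ex_has_greatest_nat[of ?P S card "Suc (card V)"] S by auto
  have blk: "is_block V E B"
    unfolding is_block_def
  proof (intro conjI allI impI)
    fix B' assume "B \<subset> B' \<and> B' \<subseteq> V"
    then have "card B < card B'" using fin by (meson psubset_card_mono rev_finite_subset)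
    moreover have "S \<subseteq> B'" using B \<open>B \<subset> B' \<and> B' \<subseteq> V\<close> by blast
    ultimately show "\<not> nonsep_set E B'" using mx \<open>B \<subset> B' \<and> B' \<subseteq> V\<close>
      by (meson leD)
  qed (use B in blast)+
  have "is_cycle_graph_on E B \<or> is_K2_on E B" using assms blk by (simp add: cactus_def)
  moreover have vB: "v \<in> B" using B v by auto
  moreover have finB: "finite B" using B fin finite_subset by blast
  moreover have irr: "\<forall>x. \<not> E x x" using assms by (simp add: cactus_def simple_graph_def)
  ultimately have "card {u\<in>B. E v u} \<le> 2"
  proof (elim disjE)
    assume "is_cycle_graph_on E B" then show ?thesis using vB by (simp add: is_cycle_graph_on_def)
  next
    assume k: "is_K2_on E B"
    have "{u\<in>B. E v u} \<subseteq> B - {v}" using irr by auto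
    then have "card {u\<in>B. E v u} \<le> card (B - {v})" using finB by (simp add: card_mono)
    then show ?thesis using k vB by (simp add: is_K2_on_def)
  qed
  moreover have "{u\<in>S. E v u} \<subseteq> {u\<in>B. E v u}" using B by auto
  moreover have "finite {u\<in>B. E v u}" using finB by simp
  ultimately show "card {u\<in>S. E v u} \<le> 2"
    using card_mono[of "{u\<in>B. E v u}" "{u\<in>S. E v u}"] by linarith
qed

lemma list_cases3:
  "xs \<noteq> [] \<Longrightarrow> length xs \<le> 3 \<Longrightarrow> (\<And>a. xs = [a] \<Longrightarrow> P) \<Longrightarrow> (\<And>a b. xs = [a,b] \<Longrightarrow> P)
   \<Longrightarrow> (\<And>a b c. xs = [a,b,c] \<Longrightarrow> P) \<Longrightarrow> P"
  apply (cases xs)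
   apply simp
  apply (rename_tac a t)
  apply (case_tac t)
   apply simp
  apply (rename_tac b t2)
  apply (case_tac t2)
   apply simp
  apply (rename_tac c t3)
  apply (case_tac t3)
   apply simp
  apply simp
  done

lemma dist2_iff: "dist_le E 2 p q \<longleftrightarrow> p = q \<or> E p q \<or> (\<exists>z. E p z \<and> E z q)"
proof
  assume "dist_le E 2 p q"
  then obtain xs where xs: "walk E xs" "hd xs = p" "last xs = q" "length xs \<le> 3"
    by (auto simp: dist_le_def numeral_2_eq_2 numeral_3_eq_3)
  then have "xs \<noteq> []" by auto
  then show "p = q \<or> E p q \<or> (\<exists>z. E p z \<and> E z q)"
    by (rule list_cases3) (use xs in auto)
next
  assume h: "p = q \<or> E p q \<or> (\<exists>z. E p z \<and> E z q)"
  show "dist_le E 2 p q"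
  proof (cases "p = q")
    case True then show ?thesis unfolding dist_le_def by (intro exI[of _ "[p]"]) simp
  next
    case False
    show ?thesis
    proof (cases "E p q")
      case True then show ?thesis unfolding dist_le_def by (intro exI[of _ "[p,q]"]) simp
    next
      case False
      then obtain z where "E p z" "E z q" using h \<open>p \<noteq> q\<close> by blast
      then show ?thesis unfolding dist_le_def by (intro exI[of _ "[p,z,q]"]) (simp add: numeral_2_eq_2)
    qed
  qed
qed




definition seg :: "'a list \<Rightarrow> nat \<Rightarrow> nat \<Rightarrow> 'a list" where
  "seg xs i k = drop i (take (Suc k) xs)"

lemma seg_len: "k < length xs \<Longrightarrow> i \<le> k \<Longrightarrow> length (seg xs i k) = Suc k - i"
  by (simp add: seg_def)

lemma seg_nth: "k < length xs \<Longrightarrow> i + t \<le> k \<Longrightarrow> seg xs i k ! t = xs ! (i + t)"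
  by (simp add: seg_def)

lemma seg_ne: "k < length xs \<Longrightarrow> i \<le> k \<Longrightarrow> seg xs i k \<noteq> []"
  using seg_len[of k xs i] by auto

lemma seg_hd: "k < length xs \<Longrightarrow> i \<le> k \<Longrightarrow> hd (seg xs i k) = xs ! i"
  using seg_nth[of k xs i 0] seg_ne[of k xs i] by (simp add: hd_conv_nth)

lemma seg_last: "k < length xs \<Longrightarrow> i \<le> k \<Longrightarrow> last (seg xs i k) = xs ! k"
  using seg_nth[of k xs i "k - i"] seg_ne[of k xs i] seg_len[of k xs i] by (simp add: last_conv_nth)

lemma seg_mem: "k < length xs \<Longrightarrow> i \<le> m \<Longrightarrow> m \<le> k \<Longrightarrow> xs ! m \<in> set (seg xs i k)"
proof -
  assume a: "k < length xs" "i \<le> m" "m \<le> k"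
  then have "seg xs i k ! (m - i) = xs ! m" using seg_nth[of k xs i "m - i"] by simp
  moreover have "m - i < length (seg xs i k)" using a seg_len[of k xs i] by simp
  ultimately show ?thesis by (metis nth_mem)
qed

lemma seg_sub: "set (seg xs i k) \<subseteq> set xs"
  unfolding seg_def by (meson set_drop_subset set_take_subset order_trans)

lemma seg_distinct: "distinct xs \<Longrightarrow> distinct (seg xs i k)"
  by (simp add: seg_def)

lemma seg_walk: "walk E xs \<Longrightarrow> k < length xs \<Longrightarrow> i \<le> k \<Longrightarrow> walk E (seg xs i k)"
  unfolding seg_def
  by (rule walk_drop[OF walk_take]) auto

lemma cyc_seg:
  assumes "distinct xs" "walk E xs" "k < length xs" "i + 2 \<le> k" "E (xs ! k) (xs ! i)"
  shows "cyc E (seg xs i k)"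
  using assms seg_len[of k xs i] seg_hd[of k xs i] seg_last[of k xs i] seg_walk[of E xs k i]
    seg_distinct[of xs i k]
  unfolding cyc_def by auto

lemma cyc_seg_app:
  assumes "distinct xs" "walk E xs" "k < length xs" "i \<le> k" "ws \<noteq> []" "distinct ws"
    "set ws \<inter> set xs = {}" "walk E ws" "E (xs ! k) (hd ws)" "E (last ws) (xs ! i)"
    "3 \<le> Suc k - i + length ws"
  shows "cyc E (seg xs i k @ ws)"
proof -
  have ne: "seg xs i k \<noteq> []" using seg_ne assms by blast
  have "walk E (seg xs i k @ ws)"
    using walk_append[OF ne assms(5)] assms seg_walk[of E xs k i] seg_last[of k xs i] by simp
  moreover have "distinct (seg xs i k @ ws)"
    using seg_distinct[OF assms(1)] seg_sub[of xs i k] assms(6,7) by auto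
  moreover have "length (seg xs i k @ ws) \<ge> 3" using assms seg_len[of k xs i] by simp
  moreover have "E (last (seg xs i k @ ws)) (hd (seg xs i k @ ws))"
    using assms ne seg_hd[of k xs i] by simp
  ultimately show ?thesis unfolding cyc_def by blast
qed

lemma girth_tri:
  assumes "girth_at_least E 4" "E a b" "E b c" "E c a" "a \<noteq> b" "b \<noteq> c" "a \<noteq> c"
  shows False
proof -
  have "has_cycle_of_length E 3"
    unfolding has_cycle_of_length_def
    by (rule exI[of _ "[a,b,c]"]) (use assms in auto)
  then show False using assms(1) unfolding girth_at_least_def by fastforce
qed




lemma thread:
  assumes sg: "simple_graph V E" and pp: "PP V E" and g: "girth_at_least E 4"
    and ne: "V \<noteq> {}" and md: "\<forall>v\<in>V. \<exists>u w. u \<noteq> w \<and> E v u \<and> E v w"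
  shows "\<exists>x1 x2 x3 a b. x1 \<noteq> x2 \<and> x1 \<noteq> x3 \<and> x2 \<noteq> x3 \<and> a \<noteq> x1 \<and> a \<noteq> x2 \<and> a \<noteq> x3
     \<and> b \<noteq> x1 \<and> b \<noteq> x2 \<and> b \<noteq> x3
     \<and> (\<forall>u. E x1 u \<longleftrightarrow> u = a \<or> u = x2) \<and> (\<forall>u. E x2 u \<longleftrightarrow> u = x1 \<or> u = x3)
     \<and> (\<forall>u. E x3 u \<longleftrightarrow> u = x2 \<or> u = b)"
proof -
  have sym: "\<forall>u v. E u v \<longrightarrow> E v u" and irr: "\<And>v. \<not> E v v"
    and inV: "\<And>u v. E u v \<Longrightarrow> u \<in> V \<and> v \<in> V" and fin: "finite V"
    using sg unfolding simple_graph_def by blast+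
  have symE: "E u v \<Longrightarrow> E v u" for u v using sym by blast
  let ?P = "\<lambda>ys. ys \<noteq> [] \<and> distinct ys \<and> walk E ys \<and> set ys \<subseteq> V"
  obtain v0 where "v0 \<in> V" using ne by blast
  then have P0: "?P [v0]" by simp
  have bnd: "\<forall>ys. ?P ys \<longrightarrow> length ys < Suc (card V)"
  proof (intro allI impI)
    fix ys assume "?P ys"
    then have "length ys = card (set ys)" by (simp add: distinct_card)
    also have "\<dots> \<le> card V" using \<open>?P ys\<close> fin by (simp add: card_mono)
    finally show "length ys < Suc (card V)" by simp
  qed
  obtain xs where Pxs: "?P xs" and mx: "\<And>ys. ?P ys \<Longrightarrow> length ys \<le> length xs"
    using ex_has_greatest_nat[of ?P "[v0]" length "Suc (card V)", OF P0 bnd] by blast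
  define n where "n = length xs"
  have dxs: "distinct xs" and wxs: "walk E xs" and sxs: "set xs \<subseteq> V" and nexs: "xs \<noteq> []"
    using Pxs by auto
  have n0: "0 < n" using nexs n_def by simp
  have inj: "\<And>k l. k < n \<Longrightarrow> l < n \<Longrightarrow> xs ! k = xs ! l \<longleftrightarrow> k = l"
    using dxs n_def by (simp add: nth_eq_iff_index_eq)
  have idx: "\<And>y. y \<in> set xs \<Longrightarrow> \<exists>k<n. y = xs ! k"
    using n_def by (metis in_set_conv_nth)
  have ed: "\<And>k. Suc k < n \<Longrightarrow> E (xs ! k) (xs ! Suc k)"
    using wxs n_def walk_nth by blast
  have nb0: "\<And>y. E (xs ! 0) y \<Longrightarrow> y \<in> set xs"
  proof (rule ccontr)
    fix y assume e: "E (xs ! 0) y" and y: "y \<notin> set xs"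
    have "?P (y # xs)"
      using Pxs y symE[OF e] inV[OF e] nexs by (auto simp: walk_Cons hd_conv_nth)
    then show False using mx[of "y # xs"] by simp
  qed
  have x0V: "xs ! 0 \<in> V" using sxs n0 n_def by (meson nth_mem subsetD)
  obtain u w where uw: "u \<noteq> w" "E (xs ! 0) u" "E (xs ! 0) w" using md x0V by blast
  obtain ku where ku: "ku < n" "u = xs ! ku" using idx nb0 uw by blast
  obtain kw where kw: "kw < n" "w = xs ! kw" using idx nb0 uw by blast
  define J where "J = {k. k < n \<and> E (xs ! 0) (xs ! k)}"
  define j where "j = Max J"
  have finJ: "finite J" unfolding J_def by simp
  have kuJ: "ku \<in> J" using ku uw unfolding J_def by simp
  have kwJ: "kw \<in> J" using kw uw unfolding J_def by simp
  have jJ: "j \<in> J" unfolding j_def using finJ kuJ by (intro Max_in) auto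
  have jn: "j < n" and e0j: "E (xs ! 0) (xs ! j)" using jJ unfolding J_def by auto
  have jmax: "\<And>k. k < n \<Longrightarrow> E (xs ! 0) (xs ! k) \<Longrightarrow> k \<le> j"
    using finJ unfolding j_def J_def by simp
  have ku0: "ku \<noteq> 0"
  proof assume "ku = 0" then show False using ku(2) uw(2) irr by simp qed
  have kw0: "kw \<noteq> 0"
  proof assume "kw = 0" then show False using kw(2) uw(3) irr by simp qed
  have "ku \<noteq> kw" using ku kw uw by auto
  moreover have "ku \<le> j" "kw \<le> j" using jmax ku kw uw by blast+
  ultimately have j2: "2 \<le> j" using ku0 kw0 by presburger
  have n1: "1 < n" using j2 jn by simp
  have e01: "E (xs ! 0) (xs ! 1)" using ed[of 0] n1 by simp
  have j3: "3 \<le> j"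
  proof (rule ccontr)
    assume "\<not> 3 \<le> j"
    then have "j = 2" using j2 by simp
    then have "E (xs ! 1) (xs ! 2)" using ed[of 1] jn by (simp add: numeral_2_eq_2)
    moreover have "E (xs ! 2) (xs ! 0)" using symE[OF e0j] \<open>j = 2\<close> by simp
    moreover have "xs ! 0 \<noteq> xs ! 1" using inj[of 0 1] n1 by simp
    moreover have "xs ! 1 \<noteq> xs ! 2" using inj[of 1 2] jn \<open>j = 2\<close> by simp
    moreover have "xs ! 0 \<noteq> xs ! 2" using inj[of 0 2] jn \<open>j = 2\<close> by simp
    ultimately show False using girth_tri[OF g e01] by blast
  qed
  define C1 where "C1 = seg xs 0 j"
  have cC1: "cyc E C1" unfolding C1_def
    by (rule cyc_seg) (use dxs wxs jn n_def j3 symE[OF e0j] in auto)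
  have sC1: "set C1 \<subseteq> V" using seg_sub[of xs 0 j] sxs unfolding C1_def by (rule order_trans)
  have mC1: "\<And>m. m \<le> j \<Longrightarrow> xs ! m \<in> set C1"
    unfolding C1_def using seg_mem[of j xs 0] jn n_def by simp
  note bad = PP_three[OF pp sym cC1 _ sC1]
  have claimA: "\<And>y. E (xs ! 0) y \<Longrightarrow> y = xs ! 1 \<or> y = xs ! j"
  proof (rule ccontr)
    fix y assume e: "E (xs ! 0) y" and ny: "\<not> (y = xs ! 1 \<or> y = xs ! j)"
    obtain k where k: "k < n" "y = xs ! k" using idx nb0 e by blast
    have "k \<le> j" using jmax k e by blast
    moreover have "k \<noteq> 0"
    proof assume "k = 0" then show False using irr e k(2) by simp qed
    moreover have "k \<noteq> 1" "k \<noteq> j" using ny k by auto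
    ultimately have k2: "2 \<le> k" "k < j" by auto
    have c2: "cyc E (seg xs 0 k)"
      by (rule cyc_seg) (use dxs wxs k n_def k2 symE[OF e] in auto)
    show False
    proof (rule bad[OF c2, of "xs ! 0" "xs ! 1" "xs ! 0" "xs ! 1" "xs ! k" "xs ! j"])
      show "set (seg xs 0 k) \<subseteq> V" using seg_sub[of xs 0 k] sxs by (rule order_trans)
      show "xs ! 0 \<noteq> xs ! 1" "xs ! 1 \<noteq> xs ! k" "xs ! 1 \<noteq> xs ! j" "xs ! k \<noteq> xs ! j"
        using inj k k2 jn j3 by auto
      show "E (xs ! 0) (xs ! 1)" "E (xs ! 0) (xs ! k)" "E (xs ! 0) (xs ! j)" using e01 e k e0j by auto
    qed (use mC1 seg_mem[of k xs 0] k n_def k2 j3 in auto)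
  qed
  have claimB: "y = xs ! (i - 1) \<or> y = xs ! Suc i" if i12: "i = 1 \<or> i = 2" and e: "E (xs ! i) y" for i y
  proof (rule ccontr)
    assume ny: "\<not> (y = xs ! (i - 1) \<or> y = xs ! Suc i)"
    have iS: "Suc i \<le> j" "Suc i < n" using i12 j3 jn by auto
    have i1: "1 \<le> i" "i \<le> 2" using i12 by auto
    have mi: "xs ! i \<in> set C1" "xs ! Suc i \<in> set C1" "xs ! (i - 1) \<in> set C1" using mC1 iS by auto
    have dpq: "xs ! (i - 1) \<noteq> xs ! Suc i" using inj[of "i - 1" "Suc i"] iS by simp
    have dii1: "xs ! i \<noteq> xs ! Suc i" using inj[of i "Suc i"] iS by simp
    have dii0: "xs ! (i - 1) \<noteq> xs ! i" using inj[of "i - 1" i] iS i1 by simp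
    have "E (xs ! (i - 1)) (xs ! Suc (i - 1))" using ed[of "i - 1"] iS i1 by simp
    then have e1: "E (xs ! i) (xs ! (i - 1))" using i1 symE by simp
    have e2: "E (xs ! i) (xs ! Suc i)" using ed[of i] iS by simp
    have xiS: "xs ! i \<in> set xs" using iS n_def by simp
    have badB: False if c: "cyc E ys" "set ys \<subseteq> V" "xs ! i \<in> set ys" "y \<in> set ys"
      and alt: "xs ! Suc i \<in> set ys \<or> xs ! (i - 1) \<in> set ys" for ys
      using alt
    proof
      assume a: "xs ! Suc i \<in> set ys"
      show False
        by (rule bad[OF c(1,2), where u="xs ! i" and w="xs ! Suc i" and z="xs ! i"
              and p="xs ! (i - 1)" and q="xs ! Suc i" and r=y])
          (use mi c a dpq ny dii1 e1 e2 e in auto)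
    next
      assume a: "xs ! (i - 1) \<in> set ys"
      show False
        by (rule bad[OF c(1,2), where u="xs ! (i - 1)" and w="xs ! i" and z="xs ! i"
              and p="xs ! (i - 1)" and q="xs ! Suc i" and r=y])
          (use mi c a dpq ny dii0 e1 e2 e in auto)
    qed
    show False
    proof (cases "y \<in> set xs")
      case True
      obtain k where k: "k < n" "y = xs ! k" using idx True by blast
      have ki: "k \<noteq> i" using irr e k by auto
      have ki1: "k \<noteq> i - 1" "k \<noteq> Suc i" using ny k by auto
      show False
      proof (cases "k < i")
        case True
        then have "i = 2" "k = 0" using ki1 i1 by auto
        then have "E (xs ! 0) (xs ! 2)" using symE[OF e] k by simp
        then have "xs ! 2 = xs ! 1 \<or> xs ! 2 = xs ! j" using claimA by blast
        then show False using inj[of 2 1] inj[of 2 j] jn j3 iS \<open>i = 2\<close> by auto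
      next
        case False
        then have ik: "i + 2 \<le> k" using ki ki1 by auto
        have c2: "cyc E (seg xs i k)"
          by (rule cyc_seg) (use dxs wxs k n_def ik symE[OF e] in auto)
        show False
        proof (rule badB[OF c2])
          show "set (seg xs i k) \<subseteq> V" using seg_sub[of xs i k] sxs by (rule order_trans)
          show "xs ! i \<in> set (seg xs i k)" using seg_mem[of k xs i i] k ik n_def by simp
          show "y \<in> set (seg xs i k)" using seg_mem[of k xs i k] k ik n_def by simp
          show "xs ! Suc i \<in> set (seg xs i k) \<or> xs ! (i - 1) \<in> set (seg xs i k)"
            using seg_mem[of k xs i "Suc i"] k ik n_def by simp
        qed
      qed
    next
      case False
      note ynot = False
      have yV: "y \<in> V" using inV[OF e] by simp
      have yxi: "y \<noteq> xs ! i" using ynot xiS by auto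
      obtain y' where y': "E y y'" "y' \<noteq> xs ! i" using md yV by blast
      have yy': "y \<noteq> y'" using irr y' by auto
      show False
      proof (cases "y' \<in> set xs")
        case True
        obtain k where k: "k < n" "y' = xs ! k" using idx True by blast
        have ki: "k \<noteq> i" using y' k by auto
        have k0: "k \<noteq> 0"
        proof
          assume "k = 0"
          then have "E (xs ! 0) y" using symE[OF y'(1)] k by simp
          then show False using nb0 ynot by blast
        qed
        show False
        proof (cases "k = i - 1 \<or> k = Suc i")
          case True
          then have "E y' (xs ! i)" using e1 e2 k symE by auto
          moreover have "xs ! i \<noteq> y'" using y' by auto
          ultimately show False using girth_tri[OF g e y'(1)] yxi yy' by auto
        next
          case False
          then have ik: "i + 2 \<le> k" using ki k0 i1 by auto
          have c2: "cyc E (seg xs i k @ [y])"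
            by (rule cyc_seg_app) (use dxs wxs k n_def ik symE[OF e] symE[OF y'(1)] ynot in auto)
          show False
          proof (rule badB[OF c2])
            show "set (seg xs i k @ [y]) \<subseteq> V" using seg_sub[of xs i k] sxs yV by auto
            show "xs ! i \<in> set (seg xs i k @ [y])" using seg_mem[of k xs i i] k ik n_def by simp
            show "y \<in> set (seg xs i k @ [y])" by simp
            show "xs ! Suc i \<in> set (seg xs i k @ [y]) \<or> xs ! (i - 1) \<in> set (seg xs i k @ [y])"
              using seg_mem[of k xs i "Suc i"] k ik n_def by simp
          qed
        qed
      next
        case False
        note y'not = False
        have y'V: "y' \<in> V" using inV[OF y'(1)] by simp
        obtain y'' where y'': "E y' y''" "y'' \<noteq> y" using md y'V by blast
        have y'y'': "y' \<noteq> y''" using irr y'' by auto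
        have y''i: "y'' \<noteq> xs ! i"
        proof
          assume "y'' = xs ! i"
          then have "E y' (xs ! i)" using y'' by simp
          moreover have "xs ! i \<noteq> y'" using y' by auto
          ultimately show False using girth_tri[OF g e y'(1)] yxi yy' by auto
        qed
        show False
        proof (cases "y'' \<in> set xs")
          case True
          obtain k where k: "k < n" "y'' = xs ! k" using idx True by blast
          have ki: "k \<noteq> i" using y''i k by auto
          have k0: "k \<noteq> 0"
          proof
            assume "k = 0"
            then have "E (xs ! 0) y'" using symE[OF y''(1)] k by simp
            then show False using nb0 y'not by blast
          qed
          show False
          proof (cases "k < i")
            case True
            then have "i = 2" "k = 1" using k0 i1 by auto
            have c2: "cyc E (seg xs 1 2 @ [y, y'])"
              by (rule cyc_seg_app)
                 (use dxs wxs iS n_def \<open>i = 2\<close> e y'(1) y''(1) k \<open>k = 1\<close> ynot y'not yy' in auto)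
            show False
            proof (rule badB[OF c2])
              show "set (seg xs 1 2 @ [y, y']) \<subseteq> V" using seg_sub[of xs 1 2] sxs yV y'V by auto
              show "xs ! i \<in> set (seg xs 1 2 @ [y, y'])"
                using seg_mem[of 2 xs 1 2] iS n_def \<open>i = 2\<close> by simp
              show "y \<in> set (seg xs 1 2 @ [y, y'])" by simp
              show "xs ! Suc i \<in> set (seg xs 1 2 @ [y, y']) \<or> xs ! (i - 1) \<in> set (seg xs 1 2 @ [y, y'])"
                using seg_mem[of 2 xs 1 1] iS n_def \<open>i = 2\<close> by simp
            qed
          next
            case False
            then have ik: "i < k" using ki by auto
            have c2: "cyc E (seg xs i k @ [y', y])"
              by (rule cyc_seg_app)
                 (use dxs wxs k n_def ik symE[OF e] symE[OF y'(1)] symE[OF y''(1)] ynot y'not yy' in auto)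
            show False
            proof (rule badB[OF c2])
              show "set (seg xs i k @ [y', y]) \<subseteq> V" using seg_sub[of xs i k] sxs yV y'V by auto
              show "xs ! i \<in> set (seg xs i k @ [y', y])" using seg_mem[of k xs i i] k ik n_def by simp
              show "y \<in> set (seg xs i k @ [y', y])" by simp
              show "xs ! Suc i \<in> set (seg xs i k @ [y', y]) \<or> xs ! (i - 1) \<in> set (seg xs i k @ [y', y])"
                using seg_mem[of k xs i "Suc i"] k ik n_def by simp
            qed
          qed
        next
          case False
          note y''not = False
          have y''V: "y'' \<in> V" using inV[OF y''(1)] by simp
          let ?zs = "y'' # y' # y # drop i xs"
          have wd: "walk E (drop i xs)" using walk_drop[OF wxs] iS n_def by simp
          have hd: "hd (drop i xs) = xs ! i" using iS n_def by (simp add: hd_drop_conv_nth)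
          have dne: "drop i xs \<noteq> []" using iS n_def by simp
          have wy: "walk E (y # drop i xs)" using wd hd dne symE[OF e] by (simp add: walk_Cons)
          have "walk E ?zs" using wy symE[OF y'(1)] symE[OF y''(1)] by simp
          moreover have "distinct ?zs"
            using dxs ynot y'not y''not yy' y'y'' y''(2) set_drop_subset[of i xs] by auto
          moreover have "set ?zs \<subseteq> V" using sxs set_drop_subset[of i xs] yV y'V y''V by auto
          ultimately have "length ?zs \<le> length xs" using mx by blast
          then show False using i1 n_def by simp
        qed
      qed
    qed
  qed
  have cB1: "\<And>y. E (xs ! 1) y \<Longrightarrow> y = xs ! 0 \<or> y = xs ! 2"
    using claimB[of 1] by (simp add: numeral_2_eq_2)
  have cB2: "\<And>y. E (xs ! 2) y \<Longrightarrow> y = xs ! 1 \<or> y = xs ! 3"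
    using claimB[of 2] by (simp add: numeral_2_eq_2 numeral_3_eq_3)
  have e12: "E (xs ! 1) (xs ! 2)" using ed[of 1] j3 jn by (simp add: numeral_2_eq_2)
  have e23: "E (xs ! 2) (xs ! 3)" using ed[of 2] j3 jn by (simp add: numeral_2_eq_2 numeral_3_eq_3)
  have n3: "3 < n" using j3 jn by simp
  have ds: "xs ! 0 \<noteq> xs ! 1" "xs ! 0 \<noteq> xs ! 2" "xs ! 1 \<noteq> xs ! 2"
    "xs ! j \<noteq> xs ! 0" "xs ! j \<noteq> xs ! 1" "xs ! j \<noteq> xs ! 2"
    "xs ! 3 \<noteq> xs ! 0" "xs ! 3 \<noteq> xs ! 1" "xs ! 3 \<noteq> xs ! 2"
    using inj[of 0 1] inj[of 0 2] inj[of 1 2] inj[of j 0] inj[of j 1] inj[of j 2]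
      inj[of 3 0] inj[of 3 1] inj[of 3 2] n3 jn j3 by auto
  show ?thesis
    apply (rule exI[of _ "xs ! 0"], rule exI[of _ "xs ! 1"], rule exI[of _ "xs ! 2"],
        rule exI[of _ "xs ! j"], rule exI[of _ "xs ! 3"])
    using ds claimA cB1 cB2 e01 e12 e23 e0j symE[OF e01] symE[OF e12] symE[OF e23] symE[OF e0j]
    by blast
qed




definition subg :: "('a \<Rightarrow> 'a \<Rightarrow> bool) \<Rightarrow> 'a set \<Rightarrow> 'a \<Rightarrow> 'a \<Rightarrow> bool" where
  "subg E X x y \<longleftrightarrow> E x y \<and> x \<notin> X \<and> y \<notin> X"

lemma sub_simple: "simple_graph V E \<Longrightarrow> simple_graph (V - X) (subg E X)"
  unfolding simple_graph_def subg_def by auto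

lemma conn_mono: "connected_on E' S \<Longrightarrow> (\<And>x y. E' x y \<Longrightarrow> E x y) \<Longrightarrow> connected_on E S"
  unfolding connected_on_def using walk_mono by metis

lemma sub_PP:
  assumes "PP V E" shows "PP (V - X) (subg E X)"
  unfolding PP_def
proof (intro allI impI ballI)
  fix S v assume S: "S \<subseteq> V - X" and ns: "nonsep_set (subg E X) S" and v: "v \<in> S"
  have m: "\<And>x y. subg E X x y \<Longrightarrow> E x y" by (simp add: subg_def)
  have cm: "connected_on E T" if "connected_on (subg E X) T" for T
    using conn_mono[of "subg E X" T E] m that by blast
  have "nonsep_set E S"
    using ns cm unfolding nonsep_set_def by blast
  then have "card {u\<in>S. E v u} \<le> 2" using assms S v unfolding PP_def by blast
  moreover have "{u\<in>S. subg E X v u} = {u\<in>S. E v u}" using S v by (auto simp: subg_def)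
  ultimately show "card {u\<in>S. subg E X v u} \<le> 2" by simp
qed

lemma sub_girth: "girth_at_least E g \<Longrightarrow> girth_at_least (subg E X) g"
  unfolding girth_at_least_def has_cycle_of_length_def
  using walk_mono[of "subg E X" _ E] by (metis subg_def)

lemma dist2_sym:
  assumes sym: "\<forall>u v. E u v \<longrightarrow> E v u" and "dist_le E 2 p q"
  shows "dist_le E 2 q p"
  using assms unfolding dist2_iff by blast

lemma dist_transfer:
  assumes sym: "\<forall>u v. E u v \<longrightarrow> E v u"
    and one: "\<forall>z\<in>X. \<forall>p q. E z p \<and> E z q \<and> p \<notin> X \<and> q \<notin> X \<longrightarrow> p = q"
    and x: "x \<notin> X" and y: "y \<notin> X" and xy: "x \<noteq> y" and d: "dist_le E 2 x y"
  shows "dist_le (subg E X) 2 x y"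
proof -
  have "E x y \<or> (\<exists>z. E x z \<and> E z y)" using d xy unfolding dist2_iff by blast
  then show ?thesis
  proof
    assume "E x y" then show ?thesis using x y unfolding dist2_iff subg_def by blast
  next
    assume "\<exists>z. E x z \<and> E z y"
    then obtain z where z: "E x z" "E z y" by blast
    show ?thesis
    proof (cases "z \<in> X")
      case True
      have "E z x" using sym z by blast
      then have "x = y" using one True z x y by blast
      then show ?thesis using xy by simp
    next
      case False
      then have "subg E X x z" "subg E X z y" using z x y by (auto simp: subg_def)
      then show ?thesis unfolding dist2_iff by blast
    qed
  qed
qed

lemma colorable_intro:
  fixes c :: "'a \<Rightarrow> nat"
  assumes "\<forall>v\<in>V. c v < 3"
    and "\<forall>x\<in>V. \<forall>y\<in>V. E x y \<longrightarrow> c x = c y \<longrightarrow> c x = 2"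
    and "\<forall>x\<in>V. \<forall>y\<in>V. x \<noteq> y \<longrightarrow> c x = 2 \<longrightarrow> c y = 2 \<longrightarrow> \<not> dist_le E 2 x y"
  shows "ab_colorable V E 2 1"
  unfolding ab_colorable_def independent_set_def two_independent_set_def
proof (rule exI[of _ c], intro conjI allI impI ballI)
  fix v assume "v \<in> V" then show "c v < 2 + 1" using assms(1) by simp
next
  fix i x y assume "i < (2::nat)" "x \<in> {v \<in> V. c v = i}" "y \<in> {v \<in> V. c v = i}"
  then show "\<not> E x y" using assms(2) by fastforce
next
  fix i x y assume "2 \<le> i \<and> i < (2::nat) + 1" "x \<in> {v \<in> V. c v = i}" "y \<in> {v \<in> V. c v = i}" "x \<noteq> y"
  then show "\<not> dist_le E 2 x y" using assms(3) by fastforce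
qed

lemma colorable_elim:
  assumes "ab_colorable V E 2 1"
  obtains c :: "'a \<Rightarrow> nat" where "\<forall>v\<in>V. c v < 3"
    and "\<forall>x\<in>V. \<forall>y\<in>V. E x y \<longrightarrow> c x = c y \<longrightarrow> c x = 2"
    and "\<forall>x\<in>V. \<forall>y\<in>V. x \<noteq> y \<longrightarrow> c x = 2 \<longrightarrow> c y = 2 \<longrightarrow> \<not> dist_le E 2 x y"
proof -
  obtain c :: "'a \<Rightarrow> nat" where c1: "\<forall>v\<in>V. c v < 2 + 1"
    and c2: "\<forall>i<2. independent_set E {v\<in>V. c v = i}"
    and c3: "\<forall>i. 2 \<le> i \<and> i < 2 + 1 \<longrightarrow> two_independent_set E {v\<in>V. c v = i}"
    using assms unfolding ab_colorable_def by blast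
  show ?thesis
  proof (rule that[of c])
    show "\<forall>v\<in>V. c v < 3" using c1 by simp
    show "\<forall>x\<in>V. \<forall>y\<in>V. E x y \<longrightarrow> c x = c y \<longrightarrow> c x = 2"
    proof (intro ballI impI)
      fix x y assume xy: "x \<in> V" "y \<in> V" "E x y" "c x = c y"
      show "c x = 2"
      proof (rule ccontr)
        assume "c x \<noteq> 2"
        then have "c x < 2" using c1 xy by fastforce
        then have "independent_set E {v\<in>V. c v = c x}" using c2 by blast
        then show False using xy unfolding independent_set_def by auto
      qed
    qed
    show "\<forall>x\<in>V. \<forall>y\<in>V. x \<noteq> y \<longrightarrow> c x = 2 \<longrightarrow> c y = 2 \<longrightarrow> \<not> dist_le E 2 x y"
    proof (intro ballI impI)
      fix x y assume xy: "x \<in> V" "y \<in> V" "x \<noteq> y" "c x = 2" "c y = 2"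
      have "two_independent_set E {v\<in>V. c v = 2}" using c3 by simp
      then show "\<not> dist_le E 2 x y" using xy unfolding two_independent_set_def by auto
    qed
  qed
qed

lemma main_col:
  "finite V \<Longrightarrow> simple_graph V E \<Longrightarrow> PP V E \<Longrightarrow> girth_at_least E 4 \<Longrightarrow> ab_colorable V E 2 1"
proof (induction "card V" arbitrary: V E rule: less_induct)
  case less
  note sg = less.prems(2) and pp = less.prems(3) and g = less.prems(4)
  have sym: "\<forall>u v. E u v \<longrightarrow> E v u" and irr: "\<And>v. \<not> E v v"
    and inV: "\<And>u v. E u v \<Longrightarrow> u \<in> V \<and> v \<in> V" and fin: "finite V"
    using sg unfolding simple_graph_def by blast+
  have symE: "E u v \<Longrightarrow> E v u" for u v using sym by blast
  have IH: "ab_colorable (V - X) (subg E X) 2 1" if "X \<subseteq> V" "X \<noteq> {}" for X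
  proof -
    have "card (V - X) < card V" using that fin
      by (metis Diff_subset card_seteq finite_subset subset_Diff_insert Diff_empty subsetI
          psubset_card_mono psubsetI Diff_eq_empty_iff double_diff order_refl)
    then show ?thesis
      using less.hyps[of "V - X" "subg E X"] fin sub_simple[OF sg] sub_PP[OF pp] sub_girth[OF g]
      by blast
  qed
  show ?case
  proof (cases "V = {}")
    case True
    show ?thesis by (rule colorable_intro[where c="\<lambda>_. 0"]) (use True in auto)
  next
    case Vne: False
    show ?thesis
    proof (cases "\<exists>v\<in>V. \<forall>u w. E v u \<and> E v w \<longrightarrow> u = w")
      case True
      then obtain v where v: "v \<in> V" and uq: "\<And>u w. E v u \<Longrightarrow> E v w \<Longrightarrow> u = w" by blast
      obtain c' :: "'a \<Rightarrow> nat" where c'1: "\<forall>x\<in>V - {v}. c' x < 3"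
        and c'2: "\<forall>x\<in>V - {v}. \<forall>y\<in>V - {v}. subg E {v} x y \<longrightarrow> c' x = c' y \<longrightarrow> c' x = 2"
        and c'3: "\<forall>x\<in>V - {v}. \<forall>y\<in>V - {v}. x \<noteq> y \<longrightarrow> c' x = 2 \<longrightarrow> c' y = 2 \<longrightarrow> \<not> dist_le (subg E {v}) 2 x y"
        using colorable_elim[OF IH[of "{v}"]] v by blast
      define cv where "cv = (if \<exists>u. E v u \<and> c' u = 0 then 1 else (0::nat))"
      define c where "c x = (if x = v then cv else c' x)" for x
      show ?thesis
      proof (rule colorable_intro[where c=c])
        show "\<forall>x\<in>V. c x < 3" using c'1 by (auto simp: c_def cv_def)
        show "\<forall>x\<in>V. \<forall>y\<in>V. E x y \<longrightarrow> c x = c y \<longrightarrow> c x = 2"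
        proof (intro ballI impI)
          fix x y assume xy: "x \<in> V" "y \<in> V" "E x y" "c x = c y"
          have vcase: False if "E v z" "z \<noteq> v" "c' z = cv" for z
          proof (cases "\<exists>u. E v u \<and> c' u = 0")
            case True
            then obtain u where "E v u" "c' u = 0" by blast
            then have "u = z" using uq that by blast
            then show False using that \<open>c' u = 0\<close> True by (simp add: cv_def)
          next
            case False
            then have "cv = 0" by (simp add: cv_def)
            then show False using False that by blast
          qed
          show "c x = 2"
          proof (cases "x = v")
            case True
            then have "y \<noteq> v" using irr xy by auto
            then show ?thesis using vcase[of y] xy True by (simp add: c_def)
          next
            case False
            note xv = False
            show ?thesis
            proof (cases "y = v")
              case True
              then show ?thesis using vcase[of x] xy xv symE[OF xy(3)] by (simp add: c_def)
            next
              case False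
              then have "subg E {v} x y" using xy xv by (simp add: subg_def)
              then show ?thesis using c'2 xy xv False by (simp add: c_def)
            qed
          qed
        qed
        show "\<forall>x\<in>V. \<forall>y\<in>V. x \<noteq> y \<longrightarrow> c x = 2 \<longrightarrow> c y = 2 \<longrightarrow> \<not> dist_le E 2 x y"
        proof (intro ballI impI)
          fix x y assume xy: "x \<in> V" "y \<in> V" "x \<noteq> y" "c x = 2" "c y = 2"
          have cv2: "cv \<noteq> 2" by (simp add: cv_def)
          have "x \<noteq> v" "y \<noteq> v" using xy cv2 by (auto simp: c_def)
          show "\<not> dist_le E 2 x y"
          proof
            assume "dist_le E 2 x y"
            then have "dist_le (subg E {v}) 2 x y"
              using dist_transfer[OF sym, of "{v}" x y] uq \<open>x \<noteq> v\<close> \<open>y \<noteq> v\<close> xy by blast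
            then show False using c'3 xy \<open>x \<noteq> v\<close> \<open>y \<noteq> v\<close> by (auto simp: c_def)
          qed
        qed
      qed
    next
      case False
      then have md: "\<forall>v\<in>V. \<exists>u w. u \<noteq> w \<and> E v u \<and> E v w" by blast
      obtain x1 x2 x3 a b where
        d: "x1 \<noteq> x2" "x1 \<noteq> x3" "x2 \<noteq> x3" "a \<noteq> x1" "a \<noteq> x2" "a \<noteq> x3"
           "b \<noteq> x1" "b \<noteq> x2" "b \<noteq> x3"
        and n1: "\<And>u. E x1 u \<longleftrightarrow> u = a \<or> u = x2"
        and n2: "\<And>u. E x2 u \<longleftrightarrow> u = x1 \<or> u = x3"
        and n3: "\<And>u. E x3 u \<longleftrightarrow> u = x2 \<or> u = b"
        using thread[OF sg pp g Vne md] by blast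
      define X where "X = {x1, x2, x3}"
      have e1a: "E x1 a" and e12: "E x1 x2" and e23: "E x2 x3" and e3b: "E x3 b"
        using n1 n2 n3 by auto
      have XV: "X \<subseteq> V" using inV[OF e12] inV[OF e23] unfolding X_def by auto
      have aV: "a \<in> V - X" using inV[OF e1a] d unfolding X_def by auto
      have bV: "b \<in> V - X" using inV[OF e3b] d unfolding X_def by auto
      obtain c' :: "'a \<Rightarrow> nat" where c'1: "\<forall>x\<in>V - X. c' x < 3"
        and c'2: "\<forall>x\<in>V - X. \<forall>y\<in>V - X. subg E X x y \<longrightarrow> c' x = c' y \<longrightarrow> c' x = 2"
        and c'3: "\<forall>x\<in>V - X. \<forall>y\<in>V - X. x \<noteq> y \<longrightarrow> c' x = 2 \<longrightarrow> c' y = 2 \<longrightarrow> \<not> dist_le (subg E X) 2 x y"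
        using colorable_elim[OF IH[of X]] XV unfolding X_def by blast
      define \<alpha> where "\<alpha> = c' a"
      define \<beta> where "\<beta> = c' b"
      have \<alpha>3: "\<alpha> < 3" and \<beta>3: "\<beta> < 3" using c'1 aV bV unfolding \<alpha>_def \<beta>_def by auto
      define sw where "sw = (\<alpha> \<noteq> 2 \<and> \<beta> \<noteq> 2 \<and> \<alpha> \<noteq> \<beta>)"
      define t1 where "t1 = (if sw then \<beta> else if \<alpha> \<noteq> 2 then 1 - \<alpha> else if \<beta> = 0 then 1 else (0::nat))"
      define t2 where "t2 = (if sw then 2 else if \<alpha> \<noteq> 2 then \<alpha> else if \<beta> = 0 then 0 else (1::nat))"
      define t3 where "t3 = (if sw then \<alpha> else if \<alpha> \<noteq> 2 then 1 - \<alpha> else if \<beta> = 0 then 1 else (0::nat))"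
      have cases\<alpha>: "\<alpha> = 0 \<or> \<alpha> = 1 \<or> \<alpha> = 2" using \<alpha>3 by auto
      have cases\<beta>: "\<beta> = 0 \<or> \<beta> = 1 \<or> \<beta> = 2" using \<beta>3 by auto
      have F: "t1 < 3" "t2 < 3" "t3 < 3" "\<alpha> = t1 \<longrightarrow> \<alpha> = 2" "t1 = t2 \<longrightarrow> t1 = 2"
        "t2 = t3 \<longrightarrow> t2 = 2" "t3 = \<beta> \<longrightarrow> t3 = 2" "t1 \<noteq> 2" "t3 \<noteq> 2"
        "t2 = 2 \<longrightarrow> \<alpha> \<noteq> 2 \<and> \<beta> \<noteq> 2"
        using cases\<alpha> cases\<beta> unfolding t1_def t2_def t3_def sw_def by auto
      define c where "c x = (if x = x1 then t1 else if x = x2 then t2 else if x = x3 then t3 else c' x)" for x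
      have cX: "c x1 = t1" "c x2 = t2" "c x3 = t3" using d by (auto simp: c_def)
      have cO: "x \<notin> X \<Longrightarrow> c x = c' x" for x by (auto simp: c_def X_def)
      have ca: "c a = \<alpha>" and cb: "c b = \<beta>" using cO aV bV \<alpha>_def \<beta>_def by auto
      have edgeX: "x \<in> X \<or> y \<in> X \<Longrightarrow> E x y \<Longrightarrow>
          (x = a \<and> y = x1) \<or> (x = x1 \<and> y = a) \<or> (x = x1 \<and> y = x2) \<or> (x = x2 \<and> y = x1) \<or>
          (x = x2 \<and> y = x3) \<or> (x = x3 \<and> y = x2) \<or> (x = x3 \<and> y = b) \<or> (x = b \<and> y = x3)" for x y
      proof -
        assume h: "x \<in> X \<or> y \<in> X" "E x y"
        have "E y x" using symE[OF h(2)] .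
        then show ?thesis using h n1 n2 n3 unfolding X_def by blast
      qed
      show ?thesis
      proof (rule colorable_intro[where c=c])
        show "\<forall>x\<in>V. c x < 3"
        proof
          fix x
          assume xV: "x \<in> V"
          have "x = x1 \<or> x = x2 \<or> x = x3 \<or> x \<notin> X" unfolding X_def by blast
          then show "c x < 3"
          proof (elim disjE)
            assume "x = x1" then show ?thesis using cX(1) F(1) by simp
          next
            assume "x = x2" then show ?thesis using cX(2) F(2) by simp
          next
            assume "x = x3" then show ?thesis using cX(3) F(3) by simp
          next
            assume "x \<notin> X" then show ?thesis using cO[of x] c'1 xV by simp
          qed
        qed
        show "\<forall>x\<in>V. \<forall>y\<in>V. E x y \<longrightarrow> c x = c y \<longrightarrow> c x = 2"
        proof (intro ballI impI)
          fix x y assume xy: "x \<in> V" "y \<in> V" "E x y" "c x = c y"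
          show "c x = 2"
          proof (cases "x \<in> X \<or> y \<in> X")
            case True
            from edgeX[OF True xy(3)] show ?thesis
            proof (elim disjE conjE)
              assume "x = a" "y = x1" then show ?thesis using xy(4) ca cX(1) F(4) by simp
            next
              assume "x = x1" "y = a" then show ?thesis using xy(4) ca cX(1) F(4) by simp
            next
              assume "x = x1" "y = x2" then show ?thesis using xy(4) cX(1,2) F(5) by simp
            next
              assume "x = x2" "y = x1" then show ?thesis using xy(4) cX(1,2) F(5) by simp
            next
              assume "x = x2" "y = x3" then show ?thesis using xy(4) cX(2,3) F(6) by simp
            next
              assume "x = x3" "y = x2" then show ?thesis using xy(4) cX(2,3) F(6) by simp
            next
              assume "x = x3" "y = b" then show ?thesis using xy(4) cb cX(3) F(7) by simp
            next
              assume "x = b" "y = x3" then show ?thesis using xy(4) cb cX(3) F(7) by simp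
            qed
          next
            case False
            then have "subg E X x y" using xy by (simp add: subg_def)
            then show ?thesis using c'2 xy False cO by auto
          qed
        qed
        show "\<forall>x\<in>V. \<forall>y\<in>V. x \<noteq> y \<longrightarrow> c x = 2 \<longrightarrow> c y = 2 \<longrightarrow> \<not> dist_le E 2 x y"
        proof (intro ballI impI)
          fix x y assume xy: "x \<in> V" "y \<in> V" "x \<noteq> y" "c x = 2" "c y = 2"
          have near: False if "z \<in> X" "c z = 2" "w \<noteq> z" "c w = 2" "dist_le E 2 z w" for z w
          proof -
            have zc: "z = x1 \<or> z = x2 \<or> z = x3" using that(1) unfolding X_def by simp
            have "z \<noteq> x1"
            proof
              assume "z = x1" then have "t1 = 2" using that(2) cX(1) by simp
              then show False using F(8) by simp
            qed
            moreover have "z \<noteq> x3"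
            proof
              assume "z = x3" then have "t3 = 2" using that(2) cX(3) by simp
              then show False using F(9) by simp
            qed
            ultimately have "z = x2" using zc by blast
            then have t22: "t2 = 2" using that(2) cX(2) by simp
            then have "\<alpha> \<noteq> 2" "\<beta> \<noteq> 2" using F(10) by simp_all
            have "E x2 w \<or> (\<exists>u. E x2 u \<and> E u w)" using that \<open>z = x2\<close> unfolding dist2_iff by blast
            then have "w = x1 \<or> w = x3 \<or> w = a \<or> w = b \<or> w = x2"
            proof
              assume "E x2 w" then show ?thesis using n2[of w] by blast
            next
              assume "\<exists>u. E x2 u \<and> E u w"
              then obtain u where u: "E x2 u" "E u w" by blast
              then have "u = x1 \<or> u = x3" using n2[of u] by blast
              then show ?thesis
              proof
                assume "u = x1" then show ?thesis using u n1[of w] by blast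
              next
                assume "u = x3" then show ?thesis using u n3[of w] by blast
              qed
            qed
            moreover have "c x1 \<noteq> 2" "c x3 \<noteq> 2" "c a \<noteq> 2" "c b \<noteq> 2"
              using F cX ca cb \<open>\<alpha> \<noteq> 2\<close> \<open>\<beta> \<noteq> 2\<close> by simp_all
            ultimately show False using that(3,4) \<open>z = x2\<close> by auto
          qed
          show "\<not> dist_le E 2 x y"
          proof
            assume dxy: "dist_le E 2 x y"
            show False
            proof (cases "x \<in> X")
              case True then show False using near[of x y] xy dxy by auto
            next
              case xn: False
              show False
              proof (cases "y \<in> X")
                case True then show False using near[of y x] xy dist2_sym[OF sym dxy] by auto
              next
                case yn: False
                have one: "\<forall>z\<in>X. \<forall>p q. E z p \<and> E z q \<and> p \<notin> X \<and> q \<notin> X \<longrightarrow> p = q"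
                proof (intro ballI allI impI)
                  fix z p q assume z: "z \<in> X" and pq: "E z p \<and> E z q \<and> p \<notin> X \<and> q \<notin> X"
                  have "z = x1 \<or> z = x2 \<or> z = x3" using z unfolding X_def by simp
                  then show "p = q"
                  proof (elim disjE)
                    assume "z = x1" then show ?thesis using pq n1[of p] n1[of q] unfolding X_def by auto
                  next
                    assume "z = x2" then show ?thesis using pq n2[of p] unfolding X_def by auto
                  next
                    assume "z = x3" then show ?thesis using pq n3[of p] n3[of q] unfolding X_def by auto
                  qed
                qed
                have "dist_le (subg E X) 2 x y"
                  using dist_transfer[OF sym one xn yn xy(3) dxy] .
                then show False using c'3 xy xn yn cO by auto
              qed
            qed
          qed
        qed
      qed
    qed
  qed
qed


theorem mainTheorem13:
  fixes V :: "'a set" and E :: "'a \<Rightarrow> 'a \<Rightarrow> bool"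
  assumes "cactus V E"
    and "girth_at_least E 4"
  shows "ab_colorable V E 2 1"
proof -
  have sg: "simple_graph V E" using assms(1) by (simp add: cactus_def)
  then have fin: "finite V" by (simp add: simple_graph_def)
  show ?thesis using main_col[OF fin sg cactus_PP[OF assms(1)] assms(2)] .
qed

end
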